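(* Let $p$ be an odd prime and $G$ a finite non-abelian $p$-group with cyclic center. If $\Omega_1(Z(G))\not\le\gamma_3(G)G^p$, then $G$ has a non-inner automorphism of order $p$.
   Context: $\Omega_1(X)=\langle x\in X:x^p=1\rangle$, $\gamma_3(G)$ is the third term of the lower central series, $G^p=\langle g^p:g\in G\rangle$. *)

theory Defs
  imports "HOL-Algebra.Algebra"
begin

definition center :: "('a, 'b) monoid_scheme \<Rightarrow> 'a set" where
  "center G = {z \<in> carrier G. \<forall>g \<in> carrier G. z \<otimes>\<^bsub>G\<^esub> g = g \<otimes>\<^bsub>G\<^esub> z}"

definition comm_subgroup :: "('a, 'b) monoid_scheme \<Rightarrow> 'a set \<Rightarrow> 'a set \<Rightarrow> 'a set" where
  "comm_subgroup G A B = generate G (\<Union>a \<in> A. \<Union>b \<in> B.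
      {a \<otimes>\<^bsub>G\<^esub> b \<otimes>\<^bsub>G\<^esub> inv\<^bsub>G\<^esub> a \<otimes>\<^bsub>G\<^esub> inv\<^bsub>G\<^esub> b})"

fun lower_central :: "('a, 'b) monoid_scheme \<Rightarrow> nat \<Rightarrow> 'a set" where
  "lower_central G 0 = carrier G"
| "lower_central G (Suc 0) = carrier G"
| "lower_central G (Suc (Suc i)) = comm_subgroup G (lower_central G (Suc i)) (carrier G)"

definition power_subgroup :: "('a, 'b) monoid_scheme \<Rightarrow> nat \<Rightarrow> 'a set" where
  "power_subgroup G p = generate G {g [^]\<^bsub>G\<^esub> p | g. g \<in> carrier G}"

definition Omega1 :: "('a, 'b) monoid_scheme \<Rightarrow> nat \<Rightarrow> 'a set \<Rightarrow> 'a set" where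
  "Omega1 G p S = generate G {x \<in> S. x [^]\<^bsub>G\<^esub> p = \<one>\<^bsub>G\<^esub>}"

definition inner_auto :: "('a, 'b) monoid_scheme \<Rightarrow> ('a \<Rightarrow> 'a) \<Rightarrow> bool" where
  "inner_auto G \<phi> \<longleftrightarrow> (\<exists>g \<in> carrier G. \<forall>x \<in> carrier G.
      \<phi> x = g \<otimes>\<^bsub>G\<^esub> x \<otimes>\<^bsub>G\<^esub> inv\<^bsub>G\<^esub> g)"

end

theory Submission
  imports Defs
begin

definition cmt :: "('a, 'b) monoid_scheme \<Rightarrow> 'a \<Rightarrow> 'a \<Rightarrow> 'a" where
  "cmt G x y = x \<otimes>\<^bsub>G\<^esub> y \<otimes>\<^bsub>G\<^esub> inv\<^bsub>G\<^esub> x \<otimes>\<^bsub>G\<^esub> inv\<^bsub>G\<^esub> y"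

context group begin

lemma rinv_assoc [simp]: "x \<in> carrier G \<Longrightarrow> y \<in> carrier G \<Longrightarrow> x \<otimes> (inv x \<otimes> y) = y"
  by (simp flip: m_assoc)
lemma linv_assoc [simp]: "x \<in> carrier G \<Longrightarrow> y \<in> carrier G \<Longrightarrow> inv x \<otimes> (x \<otimes> y) = y"
  by (simp flip: m_assoc)

lemma cmt_closed [simp]: "x \<in> carrier G \<Longrightarrow> y \<in> carrier G \<Longrightarrow> cmt G x y \<in> carrier G"
  by (simp add: cmt_def)

lemma center_sub: "center G \<subseteq> carrier G"
  by (auto simp: center_def)

lemma center_carrier: "c \<in> center G \<Longrightarrow> c \<in> carrier G"
  by (auto simp: center_def)

lemma center_comm: "c \<in> center G \<Longrightarrow> g \<in> carrier G \<Longrightarrow> c \<otimes> g = g \<otimes> c"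
  by (auto simp: center_def)

lemma center_comm2: "c \<in> center G \<Longrightarrow> g \<in> carrier G \<Longrightarrow> h \<in> carrier G \<Longrightarrow> g \<otimes> (c \<otimes> h) = c \<otimes> (g \<otimes> h)"
  using center_comm[of c g] center_carrier[of c] by (simp flip: m_assoc)

lemma center_subgroup: "subgroup (center G) G"
proof (rule subgroup.intro)
  show "center G \<subseteq> carrier G" by (rule center_sub)
  fix x y assume x: "x \<in> center G" and y: "y \<in> center G"
  have xc: "x \<in> carrier G" and yc: "y \<in> carrier G" using x y center_carrier by auto
  show "x \<otimes> y \<in> center G"
    unfolding center_def
  proof (intro CollectI conjI ballI)
    show "x \<otimes> y \<in> carrier G" using xc yc by simp
    fix g assume g: "g \<in> carrier G"
    have "x \<otimes> y \<otimes> g = x \<otimes> (g \<otimes> y)" using xc yc g center_comm[OF y g] by (simp add: m_assoc)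
    also have "\<dots> = g \<otimes> (x \<otimes> y)" using xc yc g center_comm[OF x g] by (simp flip: m_assoc)
    finally show "x \<otimes> y \<otimes> g = g \<otimes> (x \<otimes> y)" .
  qed
next
  show "\<one> \<in> center G" by (simp add: center_def)
next
  fix x assume x: "x \<in> center G"
  have xc: "x \<in> carrier G" using x center_carrier by auto
  show "inv x \<in> center G"
    unfolding center_def
  proof (intro CollectI conjI ballI)
    show "inv x \<in> carrier G" using xc by simp
    fix g assume g: "g \<in> carrier G"
    have "x \<otimes> g = g \<otimes> x" using center_comm[OF x g] .
    then have "inv x \<otimes> (x \<otimes> g) \<otimes> inv x = inv x \<otimes> (g \<otimes> x) \<otimes> inv x" by simp
    then show "inv x \<otimes> g = g \<otimes> inv x" using xc g by (simp add: m_assoc)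
  qed
qed

lemma subgroup_nat_pow_closed: "subgroup H G \<Longrightarrow> h \<in> H \<Longrightarrow> h [^] (n::nat) \<in> H"
  by (induction n) (auto simp: subgroup.one_closed subgroup.m_closed)

lemma center_pow: "c \<in> center G \<Longrightarrow> c [^] (n::nat) \<in> center G"
  using subgroup_nat_pow_closed[OF center_subgroup] by blast

lemma center_inv: "c \<in> center G \<Longrightarrow> inv c \<in> center G"
  using subgroup.m_inv_closed[OF center_subgroup] by blast

lemma center_mult: "c \<in> center G \<Longrightarrow> d \<in> center G \<Longrightarrow> c \<otimes> d \<in> center G"
  using subgroup.m_closed[OF center_subgroup] by blast

lemma cmt_one_iff: "x \<in> carrier G \<Longrightarrow> y \<in> carrier G \<Longrightarrow> cmt G x y = \<one> \<longleftrightarrow> x \<otimes> y = y \<otimes> x"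
proof
  assume x: "x \<in> carrier G" and y: "y \<in> carrier G"
  assume "cmt G x y = \<one>"
  then have "x \<otimes> y \<otimes> inv x \<otimes> inv y \<otimes> y \<otimes> x = y \<otimes> x" using x y by (simp add: cmt_def)
  then show "x \<otimes> y = y \<otimes> x" using x y by (simp add: m_assoc)
next
  assume x: "x \<in> carrier G" and y: "y \<in> carrier G"
  assume "x \<otimes> y = y \<otimes> x"
  then show "cmt G x y = \<one>" using x y by (simp add: cmt_def m_assoc)
qed

lemma in_center_iff: "x \<in> center G \<longleftrightarrow> x \<in> carrier G \<and> (\<forall>g\<in>carrier G. cmt G x g = \<one>)"
  using cmt_one_iff by (auto simp: center_def)

lemma cmt_eq: "x \<in> carrier G \<Longrightarrow> y \<in> carrier G \<Longrightarrow> x \<otimes> y = cmt G x y \<otimes> y \<otimes> x"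
  by (simp add: cmt_def m_assoc)

lemma cmt_pow_left_aux:
  assumes t: "t \<in> carrier G" and x: "x \<in> carrier G" and c: "cmt G t x \<in> center G"
  shows "t [^] (j::nat) \<otimes> x = (cmt G t x) [^] j \<otimes> x \<otimes> t [^] j"
proof (induction j)
  case 0 then show ?case using x by simp
next
  case (Suc j)
  let ?c = "cmt G t x"
  have cc: "?c \<in> carrier G" using t x by simp
  have "t [^] Suc j \<otimes> x = t [^] j \<otimes> (t \<otimes> x)" using t x by (simp add: m_assoc)
  also have "\<dots> = t [^] j \<otimes> (?c \<otimes> (x \<otimes> t))" using cmt_eq[OF t x] t x by (simp add: m_assoc)
  also have "\<dots> = ?c \<otimes> (t [^] j \<otimes> x) \<otimes> t" using center_comm2[OF c, of "t [^] j" "x \<otimes> t"] t x cc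
    by (simp add: m_assoc)
  also have "\<dots> = ?c \<otimes> (?c [^] j \<otimes> x \<otimes> t [^] j) \<otimes> t" using Suc by simp
  also have "\<dots> = (?c \<otimes> ?c [^] j) \<otimes> x \<otimes> (t [^] j \<otimes> t)" using cc t x
    by (simp add: m_assoc del: nat_pow_Suc)
  also have "\<dots> = ?c [^] Suc j \<otimes> x \<otimes> t [^] Suc j"
    by (metis nat_pow_Suc nat_pow_Suc2 cc)
  finally show ?case .
qed

lemma cmt_pow_left:
  assumes t: "t \<in> carrier G" and x: "x \<in> carrier G" and c: "cmt G t x \<in> center G"
  shows "cmt G (t [^] (j::nat)) x = (cmt G t x) [^] j"
proof -
  have "cmt G (t [^] j) x = (t [^] j \<otimes> x) \<otimes> inv (t [^] j) \<otimes> inv x"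
    by (simp add: cmt_def)
  also have "\<dots> = (cmt G t x) [^] j" using cmt_pow_left_aux[OF t x c, of j] t x
    by (simp add: m_assoc)
  finally show ?thesis .
qed

lemma cmt_mult_right:
  assumes a: "a \<in> carrier G" and x: "x \<in> carrier G" and y: "y \<in> carrier G"
    and c: "cmt G a y \<in> center G"
  shows "cmt G a (x \<otimes> y) = cmt G a y \<otimes> cmt G a x"
proof -
  have "cmt G a (x \<otimes> y) = a \<otimes> x \<otimes> inv a \<otimes> (a \<otimes> y \<otimes> inv a \<otimes> inv y) \<otimes> inv x"
    using a x y by (simp add: cmt_def m_assoc inv_mult_group)
  also have "\<dots> = a \<otimes> x \<otimes> inv a \<otimes> cmt G a y \<otimes> inv x" by (simp add: cmt_def)
  also have "\<dots> = cmt G a y \<otimes> cmt G a x"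
    using center_comm2[OF c, of "a \<otimes> x \<otimes> inv a" "inv x"] a x y
    by (simp add: cmt_def m_assoc)
  finally show ?thesis .
qed

lemma cmt_pow_right:
  assumes a: "a \<in> carrier G" and x: "x \<in> carrier G" and c: "cmt G a x \<in> center G"
  shows "cmt G a (x [^] (k::nat)) = (cmt G a x) [^] k"
proof (induction k)
  case 0 then show ?case using a by (simp add: cmt_def)
next
  case (Suc k)
  have "cmt G a (x [^] Suc k) = cmt G a (x [^] k \<otimes> x)" by simp
  also have "\<dots> = cmt G a x \<otimes> cmt G a (x [^] k)" using cmt_mult_right[OF a _ x c] x by simp
  also have "\<dots> = (cmt G a x) [^] Suc k" using Suc a x by (metis nat_pow_Suc2 cmt_closed)
  finally show ?case .
qed

lemma cmt_center_right:
  assumes a: "a \<in> carrier G" and x: "x \<in> carrier G" and c: "c \<in> center G"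
  shows "cmt G a (x \<otimes> c) = cmt G a x"
proof -
  have cc: "c \<in> carrier G" using c center_carrier by blast
  have "cmt G a c = \<one>" using c a in_center_iff cmt_one_iff center_comm[OF c a] cc by auto
  then have "cmt G a c \<in> center G" by (simp add: center_def)
  then have "cmt G a (x \<otimes> c) = cmt G a c \<otimes> cmt G a x" using cmt_mult_right[OF a x cc] by simp
  then show ?thesis using \<open>cmt G a c = \<one>\<close> a x by simp
qed

lemma cmt_center_left:
  assumes a: "a \<in> carrier G" and x: "x \<in> carrier G" and c: "c \<in> center G"
  shows "cmt G (a \<otimes> c) x = cmt G a x"
proof -
  have cc: "c \<in> carrier G" using c center_carrier by blast
  have "cmt G (a \<otimes> c) x = a \<otimes> (c \<otimes> x) \<otimes> (inv c \<otimes> inv a) \<otimes> inv x"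
    using a x cc by (simp add: cmt_def m_assoc inv_mult_group)
  also have "\<dots> = a \<otimes> x \<otimes> inv a \<otimes> inv x"
    using center_comm[OF c x] a x cc by (simp add: m_assoc)
  finally show ?thesis by (simp add: cmt_def)
qed

end

lemma restrict_action:
  assumes A: "group_action G E \<phi>" and FE: "F \<subseteq> E"
    and inv: "\<And>g x. g \<in> carrier G \<Longrightarrow> x \<in> F \<Longrightarrow> \<phi> g x \<in> F"
  shows "group_action G F (\<lambda>g. restrict (\<phi> g) F)"
proof -
  interpret A: group_action G E \<phi> by (rule A)
  have grp: "group G" using A.group_hom group_hom.axioms(1) by blast
  have bij: "restrict (\<phi> g) F \<in> Bij F" if g: "g \<in> carrier G" for g
  proof -
    have "inj_on (\<phi> g) F" using A.inj_prop[OF g] FE inj_on_subset by blast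
    moreover have "\<phi> g ` F = F"
    proof
      show "\<phi> g ` F \<subseteq> F" using inv g by blast
      show "F \<subseteq> \<phi> g ` F"
      proof
        fix y assume y: "y \<in> F"
        have ig: "inv\<^bsub>G\<^esub> g \<in> carrier G" using g grp by simp
        have "\<phi> g (\<phi> (inv\<^bsub>G\<^esub> g) y) = \<phi> (g \<otimes>\<^bsub>G\<^esub> inv\<^bsub>G\<^esub> g) y"
          using A.composition_rule[of y g "inv\<^bsub>G\<^esub> g"] y FE g ig by auto
        also have "\<dots> = y" using g grp y FE A.id_eq_one[symmetric] by (auto simp: group.r_inv)
        finally show "y \<in> \<phi> g ` F" using inv[OF ig y] by (metis image_eqI)
      qed
    qed
    ultimately show ?thesis by (simp add: Bij_def bij_betw_def inj_on_restrict_eq)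
  qed
  show ?thesis
    unfolding group_action_def group_hom_def group_hom_axioms_def
  proof (intro conjI)
    show "group G" by (rule grp)
    show "group (BijGroup F)" by (rule group_BijGroup)
    show "(\<lambda>g. restrict (\<phi> g) F) \<in> hom G (BijGroup F)"
      unfolding hom_def
    proof (intro CollectI conjI ballI)
      show "(\<lambda>g. restrict (\<phi> g) F) \<in> carrier G \<rightarrow> carrier (BijGroup F)"
        using bij by (auto simp: BijGroup_def)
      fix x y assume x: "x \<in> carrier G" and y: "y \<in> carrier G"
      have xy: "x \<otimes>\<^bsub>G\<^esub> y \<in> carrier G" using x y grp by (simp add: group.is_monoid monoid.m_closed)
      show "restrict (\<phi> (x \<otimes>\<^bsub>G\<^esub> y)) F = restrict (\<phi> x) F \<otimes>\<^bsub>BijGroup F\<^esub> restrict (\<phi> y) F"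
        using bij[OF x] bij[OF y] A.composition_rule[OF _ x y] FE inv[OF y]
        by (auto simp: BijGroup_def compose_def fun_eq_iff)
    qed
  qed
qed

lemma (in group_action) fixed_mod:
  assumes fin: "finite (carrier G)" and pr: "Factorial_Ring.prime p" and ord: "order G = p ^ n" and finE: "finite E"
  shows "p dvd card (E - {x \<in> E. \<forall>g\<in>carrier G. \<phi> g x = x})"
proof -
  let ?F = "{x \<in> E. \<forall>g\<in>carrier G. \<phi> g x = x}"
  have grp: "group G" using group_hom group_hom.axioms(1) by blast
  have one_closed: "\<one>\<^bsub>G\<^esub> \<in> carrier G" using grp by (simp add: group.is_monoid monoid.one_closed)
  define f where "f x = (if x \<in> ?F then 0 else (1::nat))" for x
  have "card (E - ?F) = (\<Sum>x\<in>E. f x)"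
  proof -
    have "(\<Sum>x\<in>E. f x) = (\<Sum>x\<in>E - ?F. f x) + (\<Sum>x\<in>?F. f x)"
      using finE sum.subset_diff[of ?F E f] by auto
    also have "(\<Sum>x\<in>?F. f x) = 0" by (simp add: f_def)
    also have "(\<Sum>x\<in>E - ?F. f x) = (\<Sum>x\<in>E - ?F. 1)" by (rule sum.cong) (auto simp: f_def)
    finally show ?thesis by simp
  qed
  also have "\<dots> = (\<Sum>orb\<in>orbits G E \<phi>. \<Sum>x\<in>orb. f x)"
    using disjoint_sum[OF finE, of f] by simp
  also have "p dvd \<dots>"
  proof (rule dvd_sum)
    fix orb assume orb: "orb \<in> orbits G E \<phi>"
    then obtain x0 where x0: "x0 \<in> E" and orbd: "orb = orbit G \<phi> x0" unfolding orbits_def by blast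
    have orbE: "orb \<subseteq> E" using orbd x0 element_image unfolding orbit_def by blast
    show "p dvd (\<Sum>x\<in>orb. f x)"
    proof (cases "x0 \<in> ?F")
      case True
      then have "orb = {x0}" unfolding orbd orbit_def using one_closed
        by (auto intro!: exI[of _ "\<one>\<^bsub>G\<^esub>"])
      then show ?thesis using True by (simp add: f_def)
    next
      case False
      have nf: "y \<notin> ?F" if y: "y \<in> orb" for y
      proof
        assume yF: "y \<in> ?F"
        have "x0 \<in> orbit G \<phi> y" using orbit_sym[OF x0 _ ] y orbd orbE by blast
        then have "x0 = y" using yF unfolding orbit_def by auto
        then show False using False yF by simp
      qed
      then have "(\<Sum>x\<in>orb. f x) = (\<Sum>x\<in>orb. 1)" by (intro sum.cong) (auto simp: f_def)
      then have "(\<Sum>x\<in>orb. f x) = card orb" by simp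
      moreover have "p dvd card orb"
      proof -
        have "card orb * card (stabilizer G \<phi> x0) = p ^ n"
          using orbit_stabilizer_theorem[OF x0] orbd ord by simp
        then have "card orb dvd p ^ n" by (metis dvd_triv_left)
        then obtain i where i: "card orb = p ^ i" using divides_primepow_nat[OF pr] by blast
        have "i \<noteq> 0"
        proof
          assume "i = 0"
          then have c1: "card orb = 1" using i by simp
          have "x0 \<in> orb" using orbd orbit_refl[OF x0] by simp
          then have "orb = {x0}" using c1 by (metis card_1_singletonE singletonD)
          then have "x0 \<in> ?F" using x0 orbd unfolding orbit_def by auto
          then show False using False by simp
        qed
        then show ?thesis using i by simp
      qed
      ultimately show ?thesis by simp
    qed
  qed
  finally show ?thesis .
qed

context group begin

lemma cmt_inv: "x \<in> carrier G \<Longrightarrow> y \<in> carrier G \<Longrightarrow> inv (cmt G x y) = cmt G y x"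
  by (simp add: cmt_def inv_mult_group m_assoc)

lemma conj_coset:
  assumes t: "t \<in> carrier G" and g: "g \<in> carrier G"
  shows "g <# (center G #> t) #> inv g = center G #> (g \<otimes> t \<otimes> inv g)"
proof -
  have "g \<otimes> (h \<otimes> t) \<otimes> inv g = h \<otimes> (g \<otimes> t \<otimes> inv g)" if h: "h \<in> center G" for h
    using center_comm2[OF h g, of "t \<otimes> inv g"] center_carrier[OF h] t g by (simp add: m_assoc)
  then show ?thesis unfolding l_coset_def r_coset_def by auto
qed

lemma exists_Z2:
  assumes fin: "finite (carrier G)" and pr: "Factorial_Ring.prime p" and ord: "order G = p ^ n"
    and nc: "center G \<noteq> carrier G"
  shows "\<exists>t\<in>carrier G. t \<notin> center G \<and> (\<forall>g\<in>carrier G. cmt G t g \<in> center G)"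
proof -
  let ?Z = "center G"
  let ?E = "rcosets ?Z"
  let ?\<phi> = "\<lambda>g. \<lambda>H \<in> {H. H \<subseteq> carrier G}. g <# H #> (inv g)"
  let ?\<psi> = "\<lambda>g. restrict (?\<phi> g) ?E"
  have Zs: "subgroup ?Z G" by (rule center_subgroup)
  have EP: "?E \<subseteq> {H. H \<subseteq> carrier G}" using rcosets_part_G[OF Zs] by auto
  have phiZ: "?\<phi> g (?Z #> t) = ?Z #> (g \<otimes> t \<otimes> inv g)" if "g \<in> carrier G" "t \<in> carrier G" for g t
    using conj_coset[OF that(2,1)] r_coset_subset_G[OF center_sub that(2)] by simp
  have invE: "?\<phi> g H \<in> ?E" if g: "g \<in> carrier G" and H: "H \<in> ?E" for g H
  proof -
    obtain t where t: "t \<in> carrier G" "H = ?Z #> t" using H unfolding RCOSETS_def by auto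
    show ?thesis using phiZ[OF g t(1)] t g rcosetsI[OF center_sub] by simp
  qed
  have act0: "group_action G ?E ?\<psi>"
    apply (rule restrict_action[OF action_by_conjugation_on_power_set EP])
    apply (erule (1) invE)
    done
  interpret act: group_action G ?E ?\<psi> by (rule act0)
  have finE: "finite ?E"
    using finite_subset[OF rcosets_subset_PowG[OF Zs]] fin by simp
  let ?F = "{x \<in> ?E. \<forall>g\<in>carrier G. ?\<psi> g x = x}"
  have d1: "p dvd card (?E - ?F)" by (rule act.fixed_mod[OF fin pr ord finE])
  have cardE: "card ?E * card ?Z = p ^ n" using lagrange[OF Zs] ord by simp
  then have "card ?Z dvd p ^ n" by (metis dvd_triv_right)
  then obtain k where k: "card ?Z = p ^ k" using divides_primepow_nat[OF pr] by blast
  have "card ?Z < card (carrier G)"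
    using psubset_card_mono[OF fin] center_sub nc by blast
  then have "p ^ k < p ^ n" using k ord by (simp add: order_def)
  then have kn: "k < n" using pr by (metis nat_power_less_imp_less prime_gt_0_nat)
  have pk: "p ^ k > 0" using pr prime_gt_0_nat by simp
  have "p ^ n = p ^ (n - k) * p ^ k" using kn by (simp add: power_add[symmetric])
  then have "card ?E * p ^ k = p ^ (n - k) * p ^ k" using cardE k by simp
  then have "card ?E = p ^ (n - k)" using pk pr prime_gt_0_nat by simp
  then have d2: "p dvd card ?E" using kn by simp
  have FE: "?F \<subseteq> ?E" by auto
  have "card ?E = card ?F + card (?E - ?F)"
    using card_Diff_subset[OF finite_subset[OF FE finE] FE] card_mono[OF finE FE] by simp
  then have d3: "p dvd card ?F" using d1 d2 by (simp add: dvd_add_left_iff)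
  have Z1: "?Z #> \<one> = ?Z" using coset_mult_one center_sub by simp
  have ZE: "?Z \<in> ?E" using rcosetsI[OF center_sub one_closed] Z1 by simp
  have ZF: "?Z \<in> ?F"
  proof -
    have "?\<psi> g ?Z = ?Z" if g: "g \<in> carrier G" for g
    proof -
      have "?\<psi> g ?Z = ?\<phi> g (?Z #> \<one>)" using ZE Z1 by simp
      also have "\<dots> = ?Z" using phiZ[OF g one_closed] g Z1 by simp
      finally show ?thesis .
    qed
    then show ?thesis using ZE by auto
  qed
  have finF: "finite ?F" by (rule finite_subset[OF FE finE])
  have Fne: "?F \<noteq> {}"
  proof
    assume "?F = {}"
    then show False by (rule notE[OF equals0D[OF _] ZF])
  qed
  obtain F where Fd: "F = ?F" by blast
  have cF: "card F \<noteq> 0" using card_gt_0_iff[THEN iffD2, OF conjI[OF Fne finF]] Fd by simp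
  have d4: "p dvd card F" using d3 Fd by simp
  have "card F \<ge> p" using d4 cF by (simp add: dvd_imp_le)
  then have c2: "card F \<ge> 2" using pr prime_ge_2_nat by (meson le_trans)
  have finF': "finite F" using finF Fd by simp
  have "\<not> F \<subseteq> {?Z}"
  proof
    assume "F \<subseteq> {?Z}"
    then have "card F \<le> 1" using card_mono[of "{?Z}" F] by simp
    then show False using c2 by simp
  qed
  then obtain H where HF0: "H \<in> F" and HZ: "H \<noteq> ?Z" by blast
  have HF: "H \<in> ?F" using HF0 by (simp only: Fd)
  obtain t where t: "t \<in> carrier G" and Ht: "H = ?Z #> t" using HF unfolding RCOSETS_def by auto
  have tZ: "t \<notin> ?Z"
  proof
    assume "t \<in> ?Z"
    then have "H = ?Z" using Ht subgroup.rcos_const[OF Zs is_group] by simp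
    then show False using HZ by simp
  qed
  have "cmt G t g \<in> ?Z" if g: "g \<in> carrier G" for g
  proof -
    have "?\<psi> g H = H" using HF[THEN CollectD, THEN conjunct2] g by (rule bspec)
    moreover have HE: "H \<in> ?E" using HF[THEN CollectD, THEN conjunct1] .
    ultimately have "?Z #> (g \<otimes> t \<otimes> inv g) = ?Z #> t" using phiZ[OF g t] Ht by simp
    then have "g \<otimes> t \<otimes> inv g \<in> ?Z #> t" using repr_independenceD[OF Zs _ sym] g t by simp
    then obtain h where h: "h \<in> ?Z" "g \<otimes> t \<otimes> inv g = h \<otimes> t" unfolding r_coset_def by auto
    have "cmt G g t = h" using h(2) center_carrier[OF h(1)] g t by (simp add: cmt_def m_assoc)
    then have "cmt G g t \<in> ?Z" using h by simp
    then show ?thesis using cmt_inv[OF g t] center_inv by metis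
  qed
  then show ?thesis using t tZ by blast
qed

end

context group begin

lemma pow_mod_ord: "x \<in> carrier G \<Longrightarrow> x [^] (a::nat) = x [^] (a mod ord x)"
proof -
  assume x: "x \<in> carrier G"
  have e1: "x [^] (ord x * (a div ord x)) = \<one>" using x by (simp add: nat_pow_pow[symmetric])
  have "x [^] a = x [^] (a mod ord x) \<otimes> x [^] (ord x * (a div ord x))"
    using x by (simp only: nat_pow_mult mod_mult_div_eq)
  also have "\<dots> = x [^] (a mod ord x)" using e1 x by simp
  finally show ?thesis .
qed

lemma ord_pos_fin:
  assumes fin: "finite (carrier G)" and x: "x \<in> carrier G"
  shows "ord x > 0"
proof -
  have "ord x dvd order G" using ord_dvd_group_order[OF x] .
  moreover have "order G > 0" using fin by (simp add: order_gt_0_iff_finite)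
  ultimately show ?thesis by (metis dvd_0_left_iff gr0I less_numeral_extra(3))
qed

lemma cyclic_center_gen:
  assumes fin: "finite (carrier G)" and cyc: "cyclic_group (subgroup_generated G (center G))"
  shows "\<exists>\<zeta>\<in>center G. \<forall>w\<in>center G. \<exists>k::nat. w = \<zeta> [^] k"
proof -
  let ?H = "subgroup_generated G (center G)"
  have cH: "carrier ?H = center G"
    using subgroup.carrier_subgroup_generated_subgroup[OF center_subgroup] .
  have gH: "group ?H" by simp
  obtain x where x: "x \<in> carrier ?H" and eq: "carrier ?H = range (\<lambda>n::int. x [^]\<^bsub>?H\<^esub> n)"
    using group.cyclic_group[OF gH] cyc by blast
  have xZ: "x \<in> center G" using x cH by simp
  have xc: "x \<in> carrier G" using xZ center_carrier by blast
  have "\<exists>k::nat. w = x [^] k" if w: "w \<in> center G" for w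
  proof -
    obtain i :: int where wi: "w = x [^]\<^bsub>?H\<^esub> i" using w eq cH by auto
    then have wi2: "w = x [^] i" using int_pow_subgroup_generated[OF x] by simp
    let ?d = "int (ord x)"
    have dpos: "?d > 0" using ord_pos_fin[OF fin xc] by simp
    have "x [^] i = x [^] (i mod ?d)"
    proof -
      have "?d dvd (i mod ?d - i)" using mod_eq_dvd_iff[of "i mod ?d" ?d i] by simp
      then show ?thesis using int_pow_eq[OF xc, of i "i mod ?d"] by simp
    qed
    also have "i mod ?d = int (nat (i mod ?d))" using dpos by simp
    finally have "w = x [^] (nat (i mod ?d))" using wi2 by (simp add: int_pow_int)
    then show ?thesis by blast
  qed
  then show ?thesis using xZ by blast
qed

end

context group begin

lemma ord_prime_elem:
  assumes z: "z \<in> carrier G" and zp: "z [^] p = \<one>" and z1: "z \<noteq> \<one>" and pr: "Factorial_Ring.prime p"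
  shows "ord z = p"
proof -
  have "ord z dvd p" using zp pow_eq_id[OF z] by simp
  moreover have "ord z \<noteq> 1" using ord_eq_1[OF z] z1 by simp
  ultimately show ?thesis using pr by (metis prime_nat_iff)
qed

lemma ord_prime_power:
  assumes fin: "finite (carrier G)" and pr: "Factorial_Ring.prime p" and ord: "order G = p ^ n"
    and x: "x \<in> carrier G"
  shows "\<exists>r. ord x = p ^ r"
  using ord_dvd_group_order[OF x] ord divides_primepow_nat[OF pr] by metis

lemma omega_powers:
  assumes fin: "finite (carrier G)" and pr: "Factorial_Ring.prime p" and ord: "order G = p ^ n"
    and cyc: "cyclic_group (subgroup_generated G (center G))"
    and z: "z \<in> center G" and zp: "z [^] p = \<one>" and z1: "z \<noteq> \<one>"
    and w: "w \<in> center G" and wp: "w [^] p = \<one>"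
  shows "\<exists>i<p. w = z [^] i"
proof -
  obtain \<zeta> where \<zeta>: "\<zeta> \<in> center G" and gen: "\<forall>w\<in>center G. \<exists>k::nat. w = \<zeta> [^] k"
    using cyclic_center_gen[OF fin cyc] by blast
  have \<zeta>c: "\<zeta> \<in> carrier G" using \<zeta> center_carrier by blast
  have zc: "z \<in> carrier G" using z center_carrier by blast
  obtain j :: nat where j: "z = \<zeta> [^] j" using gen z by blast
  obtain k :: nat where k: "w = \<zeta> [^] k" using gen w by blast
  obtain r where r: "ord \<zeta> = p ^ r" using ord_prime_power[OF fin pr ord \<zeta>c] by blast
  have p0: "p > 1" using pr prime_gt_1_nat by blast
  have djp: "p ^ r dvd j * p" using zp j pow_eq_id[OF \<zeta>c] r \<zeta>c by (simp add: nat_pow_pow)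
  have dkp: "p ^ r dvd k * p" using wp k pow_eq_id[OF \<zeta>c] r \<zeta>c by (simp add: nat_pow_pow)
  have ndj: "\<not> p ^ r dvd j" using z1 j pow_eq_id[OF \<zeta>c] r by simp
  have r0: "r \<noteq> 0"
  proof
    assume "r = 0"
    then show False using ndj by simp
  qed
  then obtain s where s: "r = Suc s" by (cases r) auto
  have "p ^ s dvd j" using djp s p0 by (simp add: mult.commute)
  then obtain u where u: "j = p ^ s * u" by (auto simp: dvd_def)
  have "p ^ s dvd k" using dkp s p0 by (simp add: mult.commute)
  then obtain v where v: "k = p ^ s * v" by (auto simp: dvd_def)
  have npu: "\<not> p dvd u" using ndj u s by (auto simp: mult.commute)
  have u0: "u \<noteq> 0"
  proof
    assume "u = 0"
    then show False using npu by simp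
  qed
  have "coprime u p" using prime_imp_coprime_nat[OF pr npu] by (simp add: coprime_commute)
  then obtain x y where xy: "u * x = p * y + 1" using bezout_nat[OF u0, of p] by auto
  have key: "j * (v * x) = ord \<zeta> * (v * y) + k"
  proof -
    have "j * (v * x) = p ^ s * v * (u * x)" using u by (simp add: algebra_simps)
    also have "\<dots> = p ^ s * p * (v * y) + p ^ s * v" using xy by (simp add: algebra_simps)
    finally show ?thesis using r s v by (simp add: algebra_simps)
  qed
  have "z [^] (v * x) = \<zeta> [^] (j * (v * x))" using j \<zeta>c by (simp add: nat_pow_pow)
  also have "\<dots> = \<zeta> [^] (ord \<zeta> * (v * y)) \<otimes> \<zeta> [^] k" unfolding key
    by (rule nat_pow_mult[OF \<zeta>c, symmetric])
  also have "\<zeta> [^] (ord \<zeta> * (v * y)) = (\<zeta> [^] ord \<zeta>) [^] (v * y)" by (rule nat_pow_pow[OF \<zeta>c, symmetric])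
  also have "\<dots> = \<one>" using \<zeta>c by simp
  also have "\<one> \<otimes> \<zeta> [^] k = w" using k \<zeta>c by simp
  finally have wz: "w = z [^] (v * x)" by simp
  have "ord z = p" using ord_prime_elem[OF zc zp z1 pr] .
  then have "w = z [^] ((v * x) mod p)" using wz pow_mod_ord[OF zc] by simp
  moreover have "(v * x) mod p < p" using p0 by simp
  ultimately show ?thesis by blast
qed

lemma center_pth_power_or_gen:
  assumes fin: "finite (carrier G)" and pr: "Factorial_Ring.prime p" and ord: "order G = p ^ n"
    and cyc: "cyclic_group (subgroup_generated G (center G))"
    and z: "z \<in> center G" and w: "w \<in> center G"
  shows "(\<exists>c\<in>center G. w = c [^] p) \<or> (\<exists>i::nat. z = w [^] i)"
proof -
  obtain \<zeta> where \<zeta>: "\<zeta> \<in> center G" and gen: "\<forall>w\<in>center G. \<exists>k::nat. w = \<zeta> [^] k"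
    using cyclic_center_gen[OF fin cyc] by blast
  have \<zeta>c: "\<zeta> \<in> carrier G" using \<zeta> center_carrier by blast
  obtain j :: nat where j: "z = \<zeta> [^] j" using gen z by blast
  obtain k :: nat where k: "w = \<zeta> [^] k" using gen w by blast
  obtain r where r: "ord \<zeta> = p ^ r" using ord_prime_power[OF fin pr ord \<zeta>c] by blast
  show ?thesis
  proof (cases "p dvd k")
    case True
    then obtain m where m: "k = p * m" by (auto simp: dvd_def)
    have "w = (\<zeta> [^] m) [^] p" using k m \<zeta>c by (simp add: nat_pow_pow mult.commute)
    then show ?thesis using center_pow[OF \<zeta>] by blast
  next
    case False
    have k0: "k \<noteq> 0"
    proof
      assume "k = 0"
      then show False using False by simp
    qed
    have "coprime k p" using prime_imp_coprime_nat[OF pr False] by (simp add: coprime_commute)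
    then have "coprime k (p ^ r)" by simp
    then have g1: "gcd k (ord \<zeta>) = 1" using r by simp
    obtain x y where xy: "k * x = ord \<zeta> * y + gcd k (ord \<zeta>)" using bezout_nat[OF k0] by blast
    have kx: "k * x = ord \<zeta> * y + 1" using xy g1 by simp
    have o1: "\<zeta> [^] (ord \<zeta> * y) = \<one>"
    proof -
      have "\<zeta> [^] (ord \<zeta> * y) = (\<zeta> [^] ord \<zeta>) [^] y" by (rule nat_pow_pow[OF \<zeta>c, symmetric])
      also have "\<dots> = \<one>" using \<zeta>c by simp
      finally show ?thesis .
    qed
    have "w [^] x = \<zeta> [^] (k * x)" using k \<zeta>c by (simp add: nat_pow_pow)
    also have "\<dots> = \<zeta> [^] (ord \<zeta> * y) \<otimes> \<zeta> [^] (1::nat)" unfolding kx by (rule nat_pow_mult[OF \<zeta>c, symmetric])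
    also have "\<dots> = \<zeta>" using \<zeta>c o1 by simp
    finally have "z = w [^] (x * j)" using j w center_carrier[OF w] by (simp add: nat_pow_pow[symmetric])
    then show ?thesis by blast
  qed
qed

end

context group begin

lemma pow_eq_mod_ord:
  assumes x: "x \<in> carrier G" and eq: "x [^] (m::nat) = x [^] n"
  shows "m mod ord x = n mod ord x"
proof -
  have *: "m mod ord x = n mod ord x" if le: "m \<le> n" and eq: "x [^] (m::nat) = x [^] n" for m n
  proof -
    have "x [^] n = x [^] m \<otimes> x [^] (n - m)" using le x by (simp add: nat_pow_mult)
    then have "x [^] m \<otimes> x [^] (n - m) = x [^] m \<otimes> \<one>" using eq x by simp
    then have "x [^] (n - m) = \<one>" using x by (meson l_cancel nat_pow_closed one_closed)
    then have "ord x dvd n - m" using pow_eq_id[OF x] by simp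
    then show ?thesis using mod_eq_dvd_iff_nat[OF le, THEN iffD2] by (metis)
  qed
  show ?thesis
  proof (cases "m \<le> n")
    case True
    show ?thesis by (rule *[OF True eq])
  next
    case False
    then have "n \<le> m" by simp
    show ?thesis by (rule sym[OF *[OF \<open>n \<le> m\<close> eq[symmetric]]])
  qed
qed

end

locale autdata = group G for G (structure) +
  fixes p :: nat and z :: 'a and a :: 'a
  assumes pr: "Factorial_Ring.prime p" and podd: "odd p"
    and zZ: "z \<in> center G" and zp: "z [^] p = \<one>" and z1: "z \<noteq> \<one>"
    and ac: "a \<in> carrier G" and aZ: "a \<notin> center G" and ap: "a [^] p = \<one>"
    and aT: "\<forall>x\<in>carrier G. \<exists>i<p. cmt G a x = z [^] i"
begin

definition ee where "ee x = (SOME i. i < p \<and> cmt G a x = z [^] i)"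
definition qq where "qq = (p + 1) div 2"
definition hh where "hh x = qq * ee x * ee x"
definition psi where "psi k = (\<lambda>x\<in>carrier G. x \<otimes> a [^] (k * ee x) \<otimes> z [^] (k * hh x))"

lemma zc: "z \<in> carrier G" using zZ center_carrier by blast
lemma ordz: "ord z = p" using ord_prime_elem[OF zc zp z1 pr] .
lemma p1: "p > 1" using pr prime_gt_1_nat by blast

lemma ee: "x \<in> carrier G \<Longrightarrow> ee x < p \<and> cmt G a x = z [^] ee x"
proof -
  assume x: "x \<in> carrier G"
  have "\<exists>i. i < p \<and> cmt G a x = z [^] i" using aT x by blast
  then show ?thesis unfolding ee_def by (rule someI_ex)
qed

lemma cmt_aZ: "x \<in> carrier G \<Longrightarrow> cmt G a x \<in> center G"
proof -
  assume x: "x \<in> carrier G"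
  have "cmt G a x = z [^] ee x" using ee[OF x] by blast
  then show ?thesis using center_pow[OF zZ] by simp
qed

lemma z_pow_eq: "m mod p = n mod p \<Longrightarrow> z [^] (m::nat) = z [^] n"
proof -
  assume "m mod p = n mod p"
  then show ?thesis using pow_mod_ord[OF zc, of m] pow_mod_ord[OF zc, of n] ordz by simp
qed

lemma a_pow_eq: "m mod p = n mod p \<Longrightarrow> a [^] (m::nat) = a [^] n"
proof -
  assume mn: "m mod p = n mod p"
  have d: "ord a dvd p" using ap pow_eq_id[OF ac] by simp
  have "m mod ord a = n mod ord a"
    using mn mod_mod_cancel[OF d, of m] mod_mod_cancel[OF d, of n] by simp
  then show ?thesis using pow_mod_ord[OF ac, of m] pow_mod_ord[OF ac, of n] by simp
qed

lemma ee_unique: "x \<in> carrier G \<Longrightarrow> i < p \<Longrightarrow> cmt G a x = z [^] i \<Longrightarrow> ee x = i"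
  using ee[of x] pow_eq_mod_ord[OF zc, of "ee x" i] ordz by simp

lemma ee_mult: "x \<in> carrier G \<Longrightarrow> y \<in> carrier G \<Longrightarrow> ee (x \<otimes> y) = (ee x + ee y) mod p"
proof -
  assume x: "x \<in> carrier G" and y: "y \<in> carrier G"
  have "cmt G a (x \<otimes> y) = cmt G a y \<otimes> cmt G a x" using cmt_mult_right[OF ac x y cmt_aZ[OF y]] .
  also have "\<dots> = z [^] (ee x + ee y)" using ee[OF x] ee[OF y] zc by (simp add: nat_pow_mult add.commute)
  also have "\<dots> = z [^] ((ee x + ee y) mod p)" by (rule z_pow_eq) simp
  finally show ?thesis using ee_unique[of "x \<otimes> y"] x y p1 by simp
qed

lemma ee_shift:
  assumes x: "x \<in> carrier G"
  shows "ee (x \<otimes> a [^] (m::nat) \<otimes> z [^] (n::nat)) = ee x"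
proof -
  have am: "a [^] m \<in> carrier G" using ac by simp
  have "cmt G a (a [^] m) = \<one>" using ac cmt_one_iff[OF ac am] by (simp add: nat_pow_Suc2[symmetric] 
      nat_pow_mult[symmetric] add.commute)
  then have "cmt G a (x \<otimes> a [^] m) = cmt G a x"
    using cmt_mult_right[OF ac x am] ac x by (simp add: center_def)
  then have "cmt G a (x \<otimes> a [^] m \<otimes> z [^] n) = cmt G a x"
    using cmt_center_right[OF ac _ center_pow[OF zZ]] x am by simp
  then have "cmt G a (x \<otimes> a [^] m \<otimes> z [^] n) = z [^] ee x" using conjunct2[OF ee[OF x]] by (rule trans)
  moreover have "x \<otimes> a [^] m \<otimes> z [^] n \<in> carrier G" using x am zc by simp
  ultimately show ?thesis using ee_unique conjunct1[OF ee[OF x]] by blast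
qed

lemma psi_apply: "x \<in> carrier G \<Longrightarrow> psi k x = x \<otimes> a [^] (k * ee x) \<otimes> z [^] (k * hh x)"
  by (simp add: psi_def)

lemma reassoc1:
  assumes x: "x \<in> carrier G" and A: "A \<in> carrier G" and B: "B \<in> carrier G"
    and c: "c \<in> center G" and d: "d \<in> carrier G"
  shows "x \<otimes> A \<otimes> c \<otimes> B \<otimes> d = x \<otimes> (A \<otimes> B) \<otimes> (c \<otimes> d)"
proof -
  have cc: "c \<in> carrier G" using c center_carrier by blast
  have "x \<otimes> A \<otimes> c \<otimes> B \<otimes> d = x \<otimes> A \<otimes> (c \<otimes> B) \<otimes> d" using x A B cc d by (simp add: m_assoc)
  also have "\<dots> = x \<otimes> A \<otimes> (B \<otimes> c) \<otimes> d" using center_comm[OF c B] by simp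
  also have "\<dots> = x \<otimes> (A \<otimes> B) \<otimes> (c \<otimes> d)" using x A B cc d by (simp add: m_assoc)
  finally show ?thesis .
qed

lemma psi_closed: "x \<in> carrier G \<Longrightarrow> psi k x \<in> carrier G"
  unfolding psi_def using ac zc by simp

lemma psi_comp:
  assumes x: "x \<in> carrier G"
  shows "psi k (psi l x) = psi (l + k) x"
proof -
  have pc: "psi l x \<in> carrier G" using psi_closed[OF x] .
  have px: "psi l x = x \<otimes> a [^] (l * ee x) \<otimes> z [^] (l * hh x)" using psi_apply[OF x] .
  have e: "ee (psi l x) = ee x" using px ee_shift[OF x] by simp
  have h: "hh (psi l x) = hh x" using e by (simp add: hh_def)
  have "psi k (psi l x) = psi l x \<otimes> a [^] (k * ee (psi l x)) \<otimes> z [^] (k * hh (psi l x))"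
    using psi_apply[OF pc] .
  also have "\<dots> = x \<otimes> a [^] (l * ee x) \<otimes> z [^] (l * hh x) \<otimes> a [^] (k * ee x) \<otimes> z [^] (k * hh x)"
    unfolding e h unfolding px ..
  also have "\<dots> = x \<otimes> (a [^] (l * ee x) \<otimes> a [^] (k * ee x)) \<otimes> (z [^] (l * hh x) \<otimes> z [^] (k * hh x))"
    by (rule reassoc1[OF x _ _ center_pow[OF zZ]]) (use ac zc in simp_all)
  also have "\<dots> = x \<otimes> a [^] ((l + k) * ee x) \<otimes> z [^] ((l + k) * hh x)"
    using ac zc by (simp only: nat_pow_mult add_mult_distrib)
  also have "\<dots> = psi (l + k) x" using psi_apply[OF x] by simp
  finally show ?thesis .
qed

lemma psi_p: "x \<in> carrier G \<Longrightarrow> psi p x = x"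
proof -
  assume x: "x \<in> carrier G"
  have "a [^] (p * ee x) = \<one>" using ac ap by (simp add: nat_pow_pow[symmetric])
  moreover have "z [^] (p * hh x) = \<one>" using zc zp by (simp add: nat_pow_pow[symmetric])
  ultimately show ?thesis using x by (simp add: psi_def)
qed

lemma psi_0: "x \<in> carrier G \<Longrightarrow> psi 0 x = x"
  by (simp add: psi_def)

end

lemma quad_mod:
  fixes p i j :: nat
  assumes odd: "odd p"
  shows "(((p + 1) div 2) * ((i + j) mod p) * ((i + j) mod p)) mod p
         = (j * i + ((p + 1) div 2) * i * i + ((p + 1) div 2) * j * j) mod p"
proof -
  let ?q = "(p + 1) div 2"
  have q2: "2 * ?q = p + 1" using odd by presburger
  have "(?q * ((i + j) mod p) * ((i + j) mod p)) mod p = (?q * (i + j) * (i + j)) mod p"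
  proof -
    have "(?q * ((i + j) mod p) * ((i + j) mod p)) mod p = (?q * ((i + j) mod p) * (i + j)) mod p"
      by (rule mod_mult_right_eq)
    also have "?q * ((i + j) mod p) * (i + j) = (?q * (i + j)) * ((i + j) mod p)" by (simp add: ac_simps)
    also have "(?q * (i + j)) * ((i + j) mod p) mod p = (?q * (i + j)) * (i + j) mod p"
      by (rule mod_mult_right_eq)
    finally show ?thesis .
  qed
  also have "?q * (i + j) * (i + j) = (j * i + ?q * i * i + ?q * j * j) + p * (i * j)"
  proof -
    have "?q * (i + j) * (i + j) = ?q * i * i + ?q * j * j + (2 * ?q) * (i * j)"
      by (simp add: algebra_simps)
    also have "\<dots> = ?q * i * i + ?q * j * j + (p + 1) * (i * j)" using q2 by simp
    finally show ?thesis by (simp add: algebra_simps)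
  qed
  also have "(j * i + ?q * i * i + ?q * j * j + p * (i * j)) mod p = (j * i + ?q * i * i + ?q * j * j) mod p"
    by simp
  finally show ?thesis .
qed

context autdata begin

lemma reassoc2:
  assumes x: "x \<in> carrier G" and y: "y \<in> carrier G" and A: "A \<in> carrier G" and B: "B \<in> carrier G"
    and c: "c \<in> center G" and d: "d \<in> center G" and e: "e \<in> center G"
    and Ay: "A \<otimes> y = e \<otimes> y \<otimes> A"
  shows "(x \<otimes> A \<otimes> c) \<otimes> (y \<otimes> B \<otimes> d) = x \<otimes> y \<otimes> (A \<otimes> B) \<otimes> (e \<otimes> c \<otimes> d)"
proof -
  have cc: "c \<in> carrier G" and dc: "d \<in> carrier G" and ec: "e \<in> carrier G"
    using c d e center_carrier by auto
  have "(x \<otimes> A \<otimes> c) \<otimes> (y \<otimes> B \<otimes> d) = x \<otimes> A \<otimes> (c \<otimes> y) \<otimes> B \<otimes> d"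
    using x y A B cc dc by (simp add: m_assoc)
  also have "\<dots> = x \<otimes> (A \<otimes> y) \<otimes> c \<otimes> B \<otimes> d"
    using center_comm[OF c y] x y A B cc dc by (simp add: m_assoc)
  also have "\<dots> = x \<otimes> (e \<otimes> y \<otimes> A) \<otimes> c \<otimes> B \<otimes> d" using Ay by simp
  also have "\<dots> = e \<otimes> (x \<otimes> y \<otimes> A \<otimes> c \<otimes> B) \<otimes> d"
    using center_comm2[OF e x, of "y \<otimes> A \<otimes> c \<otimes> B"] x y A B cc dc ec by (simp add: m_assoc)
  also have "\<dots> = (x \<otimes> y \<otimes> A \<otimes> c \<otimes> B) \<otimes> e \<otimes> d"
    using center_comm[OF e, of "x \<otimes> y \<otimes> A \<otimes> c \<otimes> B"] x y A B cc dc ec by simp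
  also have "\<dots> = x \<otimes> y \<otimes> A \<otimes> (c \<otimes> B) \<otimes> e \<otimes> d" using x y A B cc dc ec by (simp add: m_assoc)
  also have "\<dots> = x \<otimes> y \<otimes> A \<otimes> (B \<otimes> c) \<otimes> e \<otimes> d" using center_comm[OF c B] by simp
  also have "\<dots> = x \<otimes> y \<otimes> (A \<otimes> B) \<otimes> (c \<otimes> e \<otimes> d)" using x y A B cc dc ec by (simp add: m_assoc)
  also have "c \<otimes> e = e \<otimes> c" using center_comm[OF c ec] .
  finally show ?thesis .
qed

lemma psi1_mult:
  assumes x: "x \<in> carrier G" and y: "y \<in> carrier G"
  shows "psi 1 (x \<otimes> y) = psi 1 x \<otimes> psi 1 y"
proof -
  let ?i = "ee x" and ?j = "ee y"
  have Ay: "a [^] ?i \<otimes> y = z [^] (?j * ?i) \<otimes> y \<otimes> a [^] ?i"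
  proof -
    have "a [^] ?i \<otimes> y = (cmt G a y) [^] ?i \<otimes> y \<otimes> a [^] ?i"
      by (rule cmt_pow_left_aux[OF ac y cmt_aZ[OF y]])
    also have "(cmt G a y) [^] ?i = z [^] (?j * ?i)"
      using conjunct2[OF ee[OF y]] zc by (simp add: nat_pow_pow)
    finally show ?thesis .
  qed
  have "psi 1 x \<otimes> psi 1 y = (x \<otimes> a [^] ?i \<otimes> z [^] hh x) \<otimes> (y \<otimes> a [^] ?j \<otimes> z [^] hh y)"
    using psi_apply[OF x, of 1] psi_apply[OF y, of 1] by simp
  also have "\<dots> = x \<otimes> y \<otimes> (a [^] ?i \<otimes> a [^] ?j) \<otimes> (z [^] (?j * ?i) \<otimes> z [^] hh x \<otimes> z [^] hh y)"
    by (rule reassoc2[OF x y _ _ center_pow[OF zZ] center_pow[OF zZ] center_pow[OF zZ] Ay]) (use ac in simp_all)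
  also have "a [^] ?i \<otimes> a [^] ?j = a [^] (ee (x \<otimes> y))"
  proof -
    have "a [^] ?i \<otimes> a [^] ?j = a [^] (?i + ?j)" using ac by (simp add: nat_pow_mult)
    also have "\<dots> = a [^] (ee (x \<otimes> y))" by (rule a_pow_eq) (simp add: ee_mult[OF x y])
    finally show ?thesis .
  qed
  also have "z [^] (?j * ?i) \<otimes> z [^] hh x \<otimes> z [^] hh y = z [^] (hh (x \<otimes> y))"
  proof -
    have "z [^] (?j * ?i) \<otimes> z [^] hh x \<otimes> z [^] hh y = z [^] (?j * ?i + hh x + hh y)"
      using zc by (simp add: nat_pow_mult)
    also have "\<dots> = z [^] (hh (x \<otimes> y))"
    proof (rule z_pow_eq)
      show "(?j * ?i + hh x + hh y) mod p = hh (x \<otimes> y) mod p"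
        using quad_mod[OF podd, of ?i ?j] ee_mult[OF x y] by (simp add: hh_def qq_def)
    qed
    finally show ?thesis .
  qed
  also have "x \<otimes> y \<otimes> a [^] ee (x \<otimes> y) \<otimes> z [^] hh (x \<otimes> y) = psi 1 (x \<otimes> y)"
    using psi_apply[of "x \<otimes> y" 1] x y by simp
  finally show ?thesis by (rule sym)
qed

lemma psi1_bij: "bij_betw (psi 1) (carrier G) (carrier G)"
proof -
  have p1': "p - 1 + 1 = p" "1 + (p - 1) = p" using p1 by auto
  have inj: "inj_on (psi 1) (carrier G)"
  proof (rule inj_onI)
    fix x y assume x: "x \<in> carrier G" and y: "y \<in> carrier G" and eq: "psi 1 x = psi 1 y"
    have "x = psi (1 + (p - 1)) x" using psi_p[OF x] p1' by simp
    also have "\<dots> = psi (p - 1) (psi 1 x)" using psi_comp[OF x] by simp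
    also have "\<dots> = psi (p - 1) (psi 1 y)" using eq by simp
    also have "\<dots> = psi (1 + (p - 1)) y" using psi_comp[OF y] by simp
    also have "\<dots> = y" using psi_p[OF y] p1' by simp
    finally show "x = y" .
  qed
  have "psi 1 ` carrier G = carrier G"
  proof
    show "psi 1 ` carrier G \<subseteq> carrier G" using psi_closed by blast
    show "carrier G \<subseteq> psi 1 ` carrier G"
    proof
      fix x assume x: "x \<in> carrier G"
      have "psi 1 (psi (p - 1) x) = psi (p - 1 + 1) x" using psi_comp[OF x] by simp
      also have "\<dots> = x" using psi_p[OF x] p1' by simp
      finally show "x \<in> psi 1 ` carrier G" using psi_closed[OF x, of "p - 1"] by (metis image_eqI)
    qed
  qed
  then show ?thesis using inj by (simp add: bij_betw_def)
qed

lemma psi_ext: "psi k \<in> extensional (carrier G)"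
  by (simp add: psi_def)

lemma psi1_auto: "psi 1 \<in> auto G"
  unfolding auto_def Bij_def hom_def
  using psi1_bij psi_ext psi_closed psi1_mult by auto

end

context autdata begin

lemma psi_pow: "psi 1 [^]\<^bsub>AutoGroup G\<^esub> k = psi k"
proof (induction k)
  case 0
  have "psi 0 = (\<lambda>x\<in>carrier G. x)"
    unfolding psi_def by (rule restrict_ext) simp
  then show ?case by (simp add: AutoGroup_def BijGroup_def psi_def)
next
  case (Suc k)
  have A: "psi 1 \<in> carrier (AutoGroup G)" using psi1_auto by (simp add: AutoGroup_def)
  have "psi 1 [^]\<^bsub>AutoGroup G\<^esub> k \<in> carrier (AutoGroup G)"
    using monoid.nat_pow_closed[OF group.is_monoid[OF AutoGroup] A] .
  then have Bk: "psi k \<in> Bij (carrier G)" using Suc by (simp add: AutoGroup_def auto_def)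
  have B1: "psi 1 \<in> Bij (carrier G)" using psi1_auto by (simp add: auto_def)
  have "psi 1 [^]\<^bsub>AutoGroup G\<^esub> Suc k = psi k \<otimes>\<^bsub>AutoGroup G\<^esub> psi 1" using Suc by simp
  also have "\<dots> = compose (carrier G) (psi k) (psi 1)"
    using Bk B1 by (simp add: AutoGroup_def BijGroup_def)
  also have "\<dots> = psi (Suc k)"
    unfolding compose_def psi_def[of "Suc k"]
  proof (rule restrict_ext)
    fix x assume x: "x \<in> carrier G"
    show "psi k (psi 1 x) = x \<otimes> a [^] (Suc k * ee x) \<otimes> z [^] (Suc k * hh x)"
      using psi_comp[OF x, of k 1] psi_apply[OF x, of "Suc k"] by simp
  qed
  finally show ?case .
qed

lemma psi_p_one: "psi p = \<one>\<^bsub>AutoGroup G\<^esub>"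
proof -
  have "psi p = (\<lambda>x\<in>carrier G. x)"
    unfolding psi_def by (rule restrict_ext) (use psi_p psi_apply in simp)
  then show ?thesis by (simp add: AutoGroup_def BijGroup_def)
qed

lemma exists_b: "\<exists>b\<in>carrier G. ee b = 1"
proof -
  obtain x0 where x0: "x0 \<in> carrier G" and nc: "cmt G a x0 \<noteq> \<one>"
    using aZ ac in_center_iff by blast
  let ?e = "ee x0"
  have e0: "?e \<noteq> 0"
  proof
    assume "?e = 0"
    then have "cmt G a x0 = \<one>" using ee[OF x0] by simp
    then show False using nc by simp
  qed
  have elt: "?e < p" using ee[OF x0] by simp
  have "\<not> p dvd ?e" using e0 elt by (auto dest: dvd_imp_le)
  then have "coprime p ?e" using prime_imp_coprime_nat[OF pr] by blast
  then have g1: "gcd ?e p = 1" by (simp add: coprime_iff_gcd_eq_1 gcd.commute)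
  obtain m y where my: "?e * m = p * y + gcd ?e p" using bezout_nat[OF e0] by blast
  let ?b = "x0 [^] m"
  have bc: "?b \<in> carrier G" using x0 by simp
  have "cmt G a ?b = (cmt G a x0) [^] m" by (rule cmt_pow_right[OF ac x0 cmt_aZ[OF x0]])
  also have "\<dots> = z [^] (?e * m)" using conjunct2[OF ee[OF x0]] zc by (simp add: nat_pow_pow)
  also have "\<dots> = z [^] (1::nat)"
  proof (rule z_pow_eq)
    have emx: "?e * m = 1 + y * p" using my g1 by simp
    show "(?e * m) mod p = 1 mod p" by (simp only: emx mod_mult_self1)
  qed
  finally have "cmt G a ?b = z [^] (1::nat)" .
  then have "ee ?b = 1" using ee_unique[OF bc] p1 by simp
  then show ?thesis using bc by blast
qed

lemma psi1_ord: "group.ord (AutoGroup G) (psi 1) = p"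
proof -
  interpret AG: group "AutoGroup G" by (rule AutoGroup)
  have A: "psi 1 \<in> carrier (AutoGroup G)" using psi1_auto by (simp add: AutoGroup_def)
  have "psi 1 [^]\<^bsub>AutoGroup G\<^esub> p = \<one>\<^bsub>AutoGroup G\<^esub>" using psi_pow psi_p_one by simp
  then have d: "AG.ord (psi 1) dvd p" using AG.pow_eq_id[OF A] by simp
  obtain b where b: "b \<in> carrier G" and eb: "ee b = 1" using exists_b by blast
  have n1: "psi 1 \<noteq> \<one>\<^bsub>AutoGroup G\<^esub>"
  proof
    assume "psi 1 = \<one>\<^bsub>AutoGroup G\<^esub>"
    then have "psi 1 b = b" using b by (simp add: AutoGroup_def BijGroup_def)
    then have "b \<otimes> a \<otimes> z [^] qq = b" using psi_apply[OF b, of 1] eb ac by (simp add: hh_def)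
    then have "b \<otimes> (a \<otimes> z [^] qq) = b \<otimes> \<one>" using b ac zc by (simp add: m_assoc)
    then have "a \<otimes> z [^] qq = \<one>" using b ac zc by (meson l_cancel m_closed nat_pow_closed one_closed)
    then have "a = inv (z [^] qq)" using ac zc by (simp add: inv_equality[symmetric] ) 
    then have "a \<in> center G" using center_inv[OF center_pow[OF zZ]] by simp
    then show False using aZ by simp
  qed
  have "AG.ord (psi 1) \<noteq> 1" using AG.ord_eq_1[OF A] n1 by simp
  then show ?thesis using d pr by (metis prime_nat_iff)
qed

lemma psi1_inner:
  assumes "inner_auto G (psi 1)"
  shows "\<exists>g\<in>carrier G. \<exists>b\<in>carrier G. z = cmt G (cmt G g b) b"
proof -
  obtain g where g: "g \<in> carrier G" and conj: "\<forall>x\<in>carrier G. psi 1 x = g \<otimes> x \<otimes> inv g"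
    using assms unfolding inner_auto_def by blast
  obtain b where b: "b \<in> carrier G" and eb: "ee b = 1" using exists_b by blast
  let ?w = "z [^] qq"
  have wZ: "?w \<in> center G" using center_pow[OF zZ] .
  have wc: "?w \<in> carrier G" using zc by simp
  have gb: "g \<otimes> b \<otimes> inv g = b \<otimes> a \<otimes> ?w"
    using conj b psi_apply[OF b, of 1] eb ac by (simp add: hh_def)
  let ?D = "b \<otimes> a \<otimes> inv b"
  have Dc: "?D \<in> carrier G" using b ac by simp
  have "cmt G g b = b \<otimes> a \<otimes> ?w \<otimes> inv b" using gb by (simp add: cmt_def)
  also have "\<dots> = ?D \<otimes> ?w"
    using center_comm[OF wZ, of "inv b"] b ac wc by (simp add: m_assoc)
  finally have cgb: "cmt G g b = ?D \<otimes> ?w" .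
  have "cmt G (cmt G g b) b = cmt G ?D b" using cgb cmt_center_left[OF Dc b wZ] by simp
  also have "\<dots> = b \<otimes> cmt G a b \<otimes> inv b"
    using b ac by (simp add: cmt_def m_assoc inv_mult_group)
  also have "cmt G a b = z" using conjunct2[OF ee[OF b]] eb zc by simp
  also have "b \<otimes> z \<otimes> inv b = z \<otimes> b \<otimes> inv b" using center_comm[OF zZ b] by simp
  also have "\<dots> = z" using b zc by (simp add: m_assoc)
  finally show ?thesis using g b by metis
qed

end

lemma (in group) main_lemma:
  fixes p :: nat
  assumes "group G"
    and "Factorial_Ring.prime p" and "odd p"
    and "finite (carrier G)"
    and "\<exists>n::nat. order G = p ^ n"
    and "\<not> comm_group G"
    and "cyclic_group (subgroup_generated G (center G))"
    and "\<not> Omega1 G p (center G) \<subseteq> lower_central G 3 <#>\<^bsub>G\<^esub> power_subgroup G p"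
  shows "\<exists>\<phi> \<in> auto G. group.ord (AutoGroup G) \<phi> = p \<and> \<not> inner_auto G \<phi>"
proof -
  have pr: "Factorial_Ring.prime p" and podd: "odd p" and fin: "finite (carrier G)"
    and cyc: "cyclic_group (subgroup_generated G (center G))" using assms by auto
  obtain n where ord: "order G = p ^ n" using assms(5) by blast
  let ?Z = "center G"
  let ?P = "power_subgroup G p"
  let ?C2 = "comm_subgroup G (carrier G) (carrier G)"
  let ?C3 = "comm_subgroup G ?C2 (carrier G)"
  let ?N = "lower_central G 3 <#> ?P"
  have L3: "lower_central G 3 = ?C3" by (simp add: numeral_3_eq_3)
  have C2c: "?C2 \<subseteq> carrier G"
    unfolding comm_subgroup_def by (rule generate_incl) auto
  have C3c: "?C3 \<subseteq> carrier G"
  proof -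
    have "(\<Union>a\<in>?C2. \<Union>b\<in>carrier G. {a \<otimes> b \<otimes> inv a \<otimes> inv b}) \<subseteq> carrier G"
    proof (intro subsetI)
      fix x assume "x \<in> (\<Union>a\<in>?C2. \<Union>b\<in>carrier G. {a \<otimes> b \<otimes> inv a \<otimes> inv b})"
      then obtain a b where ab: "a \<in> ?C2" "b \<in> carrier G" "x = a \<otimes> b \<otimes> inv a \<otimes> inv b" by blast
      have "a \<in> carrier G" using ab(1) C2c by (rule subsetD[rotated])
      then show "x \<in> carrier G" using ab(2,3) by simp
    qed
    then show ?thesis unfolding comm_subgroup_def[of G ?C2] by (rule generate_incl)
  qed
  have Pgen: "{g [^] p | g. g \<in> carrier G} \<subseteq> carrier G" by auto
  have Pc: "?P \<subseteq> carrier G" unfolding power_subgroup_def by (rule generate_incl[OF Pgen])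
  have Psub: "subgroup ?P G" unfolding power_subgroup_def by (rule generate_is_subgroup[OF Pgen])
  have one3: "\<one> \<in> ?C3" unfolding comm_subgroup_def by (rule generate.one)
  have oneP: "\<one> \<in> ?P" unfolding power_subgroup_def by (rule generate.one)
  have C3N: "?C3 \<subseteq> ?N"
  proof
    fix x assume x: "x \<in> ?C3"
    have "x = x \<otimes> \<one>" using x C3c by auto
    then show "x \<in> ?N" using x oneP L3 unfolding set_mult_def by blast
  qed
  have PN: "?P \<subseteq> ?N"
  proof
    fix x assume x: "x \<in> ?P"
    have "x = \<one> \<otimes> x" using x Pc by auto
    then show "x \<in> ?N" using x one3 L3 unfolding set_mult_def by blast
  qed
  have cmt3: "cmt G (cmt G g b) b \<in> ?C3" if g: "g \<in> carrier G" and b: "b \<in> carrier G" for g b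
  proof -
    have "cmt G g b \<in> ?C2" unfolding comm_subgroup_def cmt_def
      by (rule generate.incl) (use g b in blast)
    then show ?thesis unfolding comm_subgroup_def cmt_def[of G "cmt G g b" b]
      by (intro generate.incl) (use b in blast)
  qed
  let ?S = "{x \<in> ?Z. x [^] p = \<one>}"
  have Ssub: "subgroup ?S G"
  proof (rule subgroup.intro)
    show "?S \<subseteq> carrier G" using center_sub by blast
  next
    fix x y assume x: "x \<in> ?S" and y: "y \<in> ?S"
    have xc: "x \<in> carrier G" and yc: "y \<in> carrier G" using x y center_carrier by auto
    have "(x \<otimes> y) [^] p = x [^] p \<otimes> y [^] p"
      using pow_mult_distrib[OF center_comm[of x y] xc yc] x yc by simp
    then show "x \<otimes> y \<in> ?S" using x y center_mult by simp
  next
    show "\<one> \<in> ?S" using subgroup.one_closed[OF center_subgroup] by simp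
  next
    fix x assume x: "x \<in> ?S"
    have xc: "x \<in> carrier G" using x center_carrier by auto
    have "(inv x) [^] p = \<one>" using x nat_pow_inv[OF xc, of p] by simp
    then show "inv x \<in> ?S" using x center_inv by simp
  qed
  have OS: "Omega1 G p ?Z \<subseteq> ?S"
    unfolding Omega1_def by (rule generate_subgroup_incl[OF _ Ssub]) simp
  obtain z where zO: "z \<in> Omega1 G p ?Z" and zN: "z \<notin> ?N" using assms(8) by blast
  have zZ: "z \<in> ?Z" and zp: "z [^] p = \<one>" using zO OS by auto
  have z1: "z \<noteq> \<one>" using zN C3N one3 by blast
  have nc: "?Z \<noteq> carrier G"
  proof
    assume ZG: "?Z = carrier G"
    have "comm_group G"
      by (rule group_comm_groupI) (use ZG center_comm in auto)
    then show False using assms(6) by simp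
  qed
  obtain t where tc: "t \<in> carrier G" and tZ: "t \<notin> ?Z" and tT: "\<forall>g\<in>carrier G. cmt G t g \<in> ?Z"
    using exists_Z2[OF fin pr ord nc] by blast
  define Q where "Q s = (\<forall>x\<in>carrier G. (cmt G t x) [^] (p ^ s) = \<one>)" for s
  have Qn: "Q n"
    unfolding Q_def
  proof
    fix x assume x: "x \<in> carrier G"
    have "ord (cmt G t x) dvd order G" using ord_dvd_group_order tc x by simp
    then show "(cmt G t x) [^] (p ^ n) = \<one>" using pow_eq_id tc x ord by simp
  qed
  define s0 where "s0 = (LEAST s. Q s)"
  have Qs0: "Q s0" unfolding s0_def using Qn by (rule LeastI)
  have s00: "s0 \<noteq> 0"
  proof
    assume "s0 = 0"
    then have "\<forall>x\<in>carrier G. cmt G t x = \<one>" using Qs0 tc by (simp add: Q_def)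
    then show False using tZ tc in_center_iff by blast
  qed
  then obtain s where s: "s0 = Suc s" by (cases s0) auto
  have nQs: "\<not> Q s" using not_less_Least[of s Q] s s0_def by simp
  let ?t = "t [^] (p ^ s)"
  have t'c: "?t \<in> carrier G" using tc by simp
  have ct: "cmt G ?t x = (cmt G t x) [^] (p ^ s)" if x: "x \<in> carrier G" for x
    using cmt_pow_left[OF tc x] tT x by simp
  have ctZ: "cmt G ?t x \<in> ?Z" if x: "x \<in> carrier G" for x
    using ct[OF x] center_pow tT x by simp
  have ctp: "(cmt G ?t x) [^] p = \<one>" if x: "x \<in> carrier G" for x
  proof -
    have "(cmt G ?t x) [^] p = (cmt G t x) [^] (p ^ s * p)" using ct[OF x] tc x by (simp add: nat_pow_pow)
    also have "p ^ s * p = p ^ s0" using s by simp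
    finally show ?thesis using Qs0 x by (simp add: Q_def)
  qed
  have t'Z: "?t \<notin> ?Z"
  proof
    assume "?t \<in> ?Z"
    then have "\<forall>x\<in>carrier G. cmt G ?t x = \<one>" using in_center_iff by blast
    then have "Q s" unfolding Q_def using ct by simp
    then show False using nQs by simp
  qed
  let ?w = "?t [^] p"
  have wc: "?w \<in> carrier G" using t'c by simp
  have wZ: "?w \<in> ?Z"
  proof -
    have "cmt G ?w g = \<one>" if g: "g \<in> carrier G" for g
      using cmt_pow_left[OF t'c g ctZ[OF g]] ctp[OF g] by simp
    then show ?thesis using in_center_iff wc by blast
  qed
  have "(\<exists>c\<in>?Z. ?w = c [^] p) \<or> (\<exists>i::nat. z = ?w [^] i)"
    by (rule center_pth_power_or_gen[OF fin pr ord cyc zZ wZ])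
  moreover have "\<not> (\<exists>i::nat. z = ?w [^] i)"
  proof
    assume "\<exists>i::nat. z = ?w [^] i"
    then obtain i :: nat where i: "z = ?w [^] i" by blast
    have "?w \<in> ?P" unfolding power_subgroup_def by (rule generate.incl) (use t'c in blast)
    then have "z \<in> ?P" using i subgroup_nat_pow_closed[OF Psub] by simp
    then show False using PN zN by blast
  qed
  ultimately obtain c where cZ: "c \<in> ?Z" and wc': "?w = c [^] p" by blast
  have cc: "c \<in> carrier G" using cZ center_carrier by blast
  let ?a = "?t \<otimes> inv c"
  have ac: "?a \<in> carrier G" using t'c cc by simp
  have ap: "?a [^] p = \<one>"
  proof -
    have icZ: "inv c \<in> ?Z" using center_inv[OF cZ] .
    have "?a [^] p = ?t [^] p \<otimes> (inv c) [^] p"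
      using pow_mult_distrib[OF center_comm[OF icZ t'c, symmetric] t'c] cc by simp
    also have "\<dots> = c [^] p \<otimes> inv (c [^] p)" using wc' nat_pow_inv[OF cc] by simp
    also have "\<dots> = \<one>" using cc by simp
    finally show ?thesis .
  qed
  have ca: "cmt G ?a x = cmt G ?t x" if x: "x \<in> carrier G" for x
    using cmt_center_left[OF t'c x center_inv[OF cZ]] .
  have aZ: "?a \<notin> ?Z"
  proof
    assume "?a \<in> ?Z"
    then have "?a \<otimes> c \<in> ?Z" using center_mult cZ by blast
    moreover have "?a \<otimes> c = ?t" using t'c cc by (simp add: m_assoc)
    ultimately show False using t'Z by simp
  qed
  have aT: "\<forall>x\<in>carrier G. \<exists>i<p. cmt G ?a x = z [^] i"
  proof
    fix x assume x: "x \<in> carrier G"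
    show "\<exists>i<p. cmt G ?a x = z [^] i"
      using omega_powers[OF fin pr ord cyc zZ zp z1 ctZ[OF x] ctp[OF x]] ca[OF x] by simp
  qed
  interpret AD: autdata G p z ?a
    by (unfold_locales) (use pr podd zZ zp z1 ac aZ ap aT in auto)
  have ninner: "\<not> inner_auto G (AD.psi 1)"
  proof
    assume "inner_auto G (AD.psi 1)"
    then obtain g b where g: "g \<in> carrier G" and b: "b \<in> carrier G" and zeq: "z = cmt G (cmt G g b) b"
      using AD.psi1_inner by blast
    have "z \<in> ?C3" using cmt3[OF g b] zeq by simp
    then show False using C3N zN by blast
  qed
  show ?thesis using AD.psi1_auto AD.psi1_ord ninner by blast
qed

theorem lemma4p1:
  fixes G :: "('a, 'b) monoid_scheme" and p :: nat
  assumes "group G"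
    and "Factorial_Ring.prime p" and "odd p"
    and "finite (carrier G)"
    and "\<exists>n::nat. order G = p ^ n"
    and "\<not> comm_group G"
    and "cyclic_group (subgroup_generated G (center G))"
    and "\<not> Omega1 G p (center G) \<subseteq> lower_central G 3 <#>\<^bsub>G\<^esub> power_subgroup G p"
  shows "\<exists>\<phi> \<in> auto G. group.ord (AutoGroup G) \<phi> = p \<and> \<not> inner_auto G \<phi>"
  using group.main_lemma[OF assms(1) assms] .

end
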